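(* Let $k\ge 0$ be an integer and $d=2\cdot 2^{2k}$. Let $r$ be an odd positive integer with $r\ge\lceil\sqrt d\,\rceil$, and put $n=2^k r$ and $$a=2n+d=2\cdot2^k r+2\cdot 2^{2k},\qquad b=2n+\frac{2n^2}{d}=2\cdot 2^k r+r^2,\qquad c=b+d=2\cdot2^kr+r^2+2\cdot2^{2k}.$$ Then $(a,b,c)$ is an IDPT. Moreover, every IDPT $(a,b,c)$ with $c-b=2\cdot 2^{2k}$ arises in this way from some such $r$.
   Context: A Diophantine Pythagorean Triangle (DPT) is a triple $(a,b,c)$ of positive integers with $a<b<c$ and $a^2+b^2=c^2$. An IDPT is a DPT with $\gcd(a,b,c)=1$. $\lceil x\rceil$ is the smallest integer $\ge x$. *)

theory Defs
  imports Complex_Main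
begin

definition DPT :: "nat \<Rightarrow> nat \<Rightarrow> nat \<Rightarrow> bool" where
  "DPT a b c \<longleftrightarrow> 0 < a \<and> a < b \<and> b < c \<and> a^2 + b^2 = c^2"

definition IDPT :: "nat \<Rightarrow> nat \<Rightarrow> nat \<Rightarrow> bool" where
  "IDPT a b c \<longleftrightarrow> DPT a b c \<and> gcd a (gcd b c) = 1"

end

theory Submission
  imports Defs
begin

lemma odd_dvd_pow2: "odd (g::nat) \<Longrightarrow> g dvd 2^n \<Longrightarrow> g = 1"
proof -
  assume o: "odd g" and dv: "g dvd 2^n"
  have "coprime g 2" using o by (simp add: coprime_commute)
  hence "coprime g (2^n)" by simp
  thus "g = 1" using dv by (metis coprime_absorb_left gcd_nat.absorb1 coprime_iff_gcd_eq_1)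
qed

lemma part1:
  fixes m r :: nat
  assumes m: "m = 2^k" and r: "odd r" "2*m^2 < r^2"
  shows "IDPT (2*m*r + 2*m^2) (2*m*r + r^2) (2*m*r + r^2 + 2*m^2)"
proof -
  have m0: "m > 0" using m by simp
  have r0: "r > 0" using r by (cases r) auto
  have eq: "(2*m*r + 2*m^2)^2 + (2*m*r + r^2)^2 = (2*m*r + r^2 + 2*m^2)^2"
    by (simp add: power2_eq_square algebra_simps)
  define g where "g = gcd (2*m*r + 2*m^2) (gcd (2*m*r + r^2) (2*m*r + r^2 + 2*m^2))"
  have gb: "g dvd 2*m*r + r^2" unfolding g_def by (meson dvd_trans gcd_dvd1 gcd_dvd2)
  have gc: "g dvd 2*m*r + r^2 + 2*m^2" unfolding g_def by (meson dvd_trans gcd_dvd2)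
  have "g dvd 2*m^2" using gb gc by (simp add: dvd_add_right_iff)
  moreover have "2*m^2 = (2::nat)^(2*k+1)" using m by (simp add: power_mult[symmetric] power_add)
  ultimately have g2: "g dvd 2^(2*k+1)" by simp
  have ob: "odd (2*m*r + r^2)" using r by simp
  have "odd g" proof
    assume "even g" then show False using gb ob by (metis dvd_trans)
  qed
  hence "g = 1" using g2 odd_dvd_pow2 by blast
  moreover have "0 < 2*m*r + 2*m^2" using m0 by simp
  moreover have "2*m*r + 2*m^2 < 2*m*r + r^2" using r by simp
  moreover have "2*m*r + r^2 < 2*m*r + r^2 + 2*m^2" using m0 by simp
  ultimately show ?thesis using eq unfolding IDPT_def DPT_def g_def by blast
qed

lemma part2:
  fixes m a b c :: nat
  assumes m: "m = 2^k" and I: "IDPT a b c" and cb: "c - b = 2*m^2"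
  shows "\<exists>r. odd r \<and> 2*m^2 < r^2 \<and> a = 2*m*r + 2*m^2 \<and> b = 2*m*r + r^2 \<and> c = 2*m*r + r^2 + 2*m^2"
proof -
  have m0: "m > 0" using m by simp
  from I have a0: "0 < a" and ab: "a < b" and bc: "b < c" and py: "a^2 + b^2 = c^2"
    and g: "gcd a (gcd b c) = 1" unfolding IDPT_def DPT_def by auto
  have c: "c = b + 2*m^2" using cb bc by simp
  have "a^2 + b^2 = (b + 2*m^2)^2" using py c by simp
  hence a2: "a^2 = (2*m)^2 * (b + m^2)" by (simp add: power2_eq_square algebra_simps)
  hence "(2*m)^2 dvd a^2" by simp
  hence "2*m dvd a" using pow_divides_pow_iff[of 2 "2*m" a] by simp
  then obtain t where t: "a = 2*m*t" by blast
  have "(2*m)^2 * t^2 = (2*m)^2 * (b + m^2)" using a2 t by (simp add: power_mult_distrib)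
  hence t2: "t^2 = b + m^2" using m0 by simp
  have "m^2 < t^2" using t2 ab by simp
  hence mt: "m < t" using power_less_imp_less_base by blast
  define r where "r = t - m"
  have tr: "t = r + m" using mt r_def by simp
  have b: "b = 2*m*r + r^2" using t2 tr by (simp add: power2_eq_square algebra_simps)
  have a: "a = 2*m*r + 2*m^2" using t tr by (simp add: power2_eq_square algebra_simps)
  have "odd r"
  proof
    assume e: "even r"
    have "even a" using a by simp
    moreover have "even b" using b e by simp
    moreover have "even c" using c b e by simp
    ultimately have "2 dvd gcd a (gcd b c)" by simp
    thus False using g by simp
  qed
  moreover have "2*m^2 < r^2" using ab a b by simp
  ultimately show ?thesis using a b c by blast
qed

lemma ceil_iff:
  fixes r d :: nat
  assumes "odd r" "even d"
  shows "\<lceil>sqrt (real d)\<rceil> \<le> int r \<longleftrightarrow> d < r^2"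
proof -
  have "\<lceil>sqrt (real d)\<rceil> \<le> int r \<longleftrightarrow> sqrt (real d) \<le> real r" by (simp add: ceiling_le_iff)
  also have "\<dots> \<longleftrightarrow> real d \<le> (real r)^2" using of_nat_0_le_iff real_le_lsqrt sqrt_le_D by blast
  also have "\<dots> \<longleftrightarrow> d \<le> r^2" by (metis of_nat_le_iff of_nat_power)
  also have "\<dots> \<longleftrightarrow> d < r^2" using assms by (auto simp: le_less)
  finally show ?thesis .
qed

theorem theorem2:
  fixes k :: nat
  defines "d \<equiv> 2 * 2^(2*k)"
  shows "(\<forall>r::nat. odd r \<and> 0 < r \<and> \<lceil>sqrt (real d)\<rceil> \<le> int r \<longrightarrow>
            IDPT (2 * 2^k * r + 2 * 2^(2*k)) (2 * 2^k * r + r^2) (2 * 2^k * r + r^2 + 2 * 2^(2*k)))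
       \<and> (\<forall>a b c. IDPT a b c \<and> c - b = d \<longrightarrow>
            (\<exists>r::nat. odd r \<and> 0 < r \<and> \<lceil>sqrt (real d)\<rceil> \<le> int r \<and>
               a = 2 * 2^k * r + 2 * 2^(2*k) \<and> b = 2 * 2^k * r + r^2 \<and>
               c = 2 * 2^k * r + r^2 + 2 * 2^(2*k)))"
proof -
  define m :: nat where "m = 2^k"
  have pk: "(2::nat)^(2*k) = m^2" unfolding m_def by (simp add: power_mult[symmetric] mult.commute)
  have dm: "d = 2*m^2" unfolding d_def pk ..
  have ev: "even d" using dm by simp
  show ?thesis unfolding pk m_def[symmetric]
  proof (intro conjI allI impI)
    fix r :: nat assume h: "odd r \<and> 0 < r \<and> \<lceil>sqrt (real d)\<rceil> \<le> int r"
    hence "2*m^2 < r^2" using ceil_iff[of r d] ev dm by simp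
    thus "IDPT (2*m*r + 2*m^2) (2*m*r + r^2) (2*m*r + r^2 + 2*m^2)"
      using part1[OF m_def] h by blast
  next
    fix a b c assume h: "IDPT a b c \<and> c - b = d"
    then obtain r where r: "odd r" "2*m^2 < r^2" "a = 2*m*r + 2*m^2" "b = 2*m*r + r^2"
        "c = 2*m*r + r^2 + 2*m^2"
      using part2[OF m_def, of a b c] dm by blast
    have "0 < r" using r(1) by (cases r) auto
    moreover have "\<lceil>sqrt (real d)\<rceil> \<le> int r" using ceil_iff[of r d] ev dm r(1,2) by simp
    ultimately show "\<exists>r. odd r \<and> 0 < r \<and> \<lceil>sqrt (real d)\<rceil> \<le> int r \<and>
               a = 2*m*r + 2*m^2 \<and> b = 2*m*r + r^2 \<and> c = 2*m*r + r^2 + 2*m^2"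
      using r by blast
  qed
qed

end
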